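(* Let $G(n)=\sum_{k=0}^n(-1)^k\binom nk \binom{2k}{k+1}\binom{2n-2k}{n-k}$ for integers $n\ge 0$. Then $(n+1)^2G(n)=16n^2G(n-2)$ for all $n\ge 2$, and consequently for all $n\ge 0$, $$G(2n+1)=-\binom{2n+1}{n}^2,\qquad G(2n)=0.$$
   Context: Binomial coefficients $\binom{m}{j}$ are zero when $j>m$. *)

theory Defs
  imports Main
begin

definition G :: "nat \<Rightarrow> int" where
  "G n = (\<Sum>k=0..n. (-1)^k * int (n choose k) * int ((2*k) choose (k+1))
                        * int ((2*n - 2*k) choose (n - k)))"

end

theory Submission
  imports Defs Complex_Main
begin

definition Fs :: "nat \<Rightarrow> nat \<Rightarrow> int" where
  "Fs n k = (-1)^k * int (n choose k) * int ((2*k) choose (k+1)) * int ((2*n - 2*k) choose (n - k))"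

definition Qp :: "real \<Rightarrow> real \<Rightarrow> real" where
  "Qp n k = (136) * n^0 * k^0 + (-416) * n^0 * k^1 + (184) * n^0 * k^2 + (352) * n^0 * k^3 + (-320) * n^0 * k^4 + (64) * n^0 * k^5 + (612) * n^1 * k^0 + (-1216) * n^1 * k^1 + (-20) * n^1 * k^2 + (1152) * n^1 * k^3 + (-592) * n^1 * k^4 + (64) * n^1 * k^5 + (984) * n^2 * k^0 + (-1240) * n^2 * k^1 + (-640) * n^2 * k^2 + (1224) * n^2 * k^3 + (-344) * n^2 * k^4 + (16) * n^2 * k^5 + (724) * n^3 * k^0 + (-528) * n^3 * k^1 + (-660) * n^3 * k^2 + (528) * n^3 * k^3 + (-64) * n^3 * k^4 + (248) * n^4 * k^0 + (-80) * n^4 * k^1 + (-248) * n^4 * k^2 + (80) * n^4 * k^3 + (32) * n^5 * k^0 + (-32) * n^5 * k^2"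

definition Hc :: "nat \<Rightarrow> nat \<Rightarrow> real" where
  "Hc n k = real_of_int (Fs (n+2) k) * Qp (real n) (real k) /
     (4*(real n+1)^2*(real n+2)*(2*(real n - real k)+1)*(2*(real n - real k)+3))"

lemma cen: "((2*q+2) choose (q+1)) * (q+1) = 2*(2*q+1) * ((2*q) choose q)"
proof -
  have a: "(q+1) * ((2*q+2) choose (q+1)) = (2*q+2) * ((2*q+1) choose q)"
    using Suc_times_binomial[of q "2*q+1"] by (simp add: mult.commute del: binomial_Suc_Suc)
  have b: "(q+1) * ((2*q+1) choose q) = (2*q+1) * ((2*q) choose q)"
    using binomial_absorb_comp[of "2*q+1" q] by (simp add: Suc_diff_le)
  have "(q+1) * (((2*q+2) choose (q+1)) * (q+1)) = (q+1) * ((2*q+2) * ((2*q+1) choose q))"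
    using a by (simp add: mult.commute del: binomial_Suc_Suc)
  also have "\<dots> = (2*q+2) * ((q+1) * ((2*q+1) choose q))" by (simp only: ac_simps)
  also have "\<dots> = (2*q+2) * ((2*q+1) * ((2*q) choose q))" using b by (simp add: mult.commute del: binomial_Suc_Suc)
  also have "\<dots> = (q+1) * (2*(2*q+1) * ((2*q) choose q))" by (simp add: algebra_simps del: binomial_Suc_Suc)
  finally have "(q+1) * (((2*q+2) choose (q+1)) * (q+1)) = (q+1) * (2*(2*q+1) * ((2*q) choose q))" .
  moreover have nz: "(q+1::nat) \<noteq> 0" by simp
  ultimately show ?thesis by (simp only: mult_left_cancel[OF nz])
qed

lemma ylem: "((2*k+2) choose (k+2)) * (k+2) * k = (2*k+2)*(2*k+1) * ((2*k) choose (k+1))"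
proof -
  have a: "(k+2) * ((2*k+2) choose (k+2)) = (2*k+2) * ((2*k+1) choose (k+1))"
    using Suc_times_binomial[of "k+1" "2*k+1"] by (simp add: mult.commute del: binomial_Suc_Suc)
  have b: "k * ((2*k+1) choose (k+1)) = (2*k+1) * ((2*k) choose (k+1))"
    using binomial_absorb_comp[of "2*k+1" "k+1"] by (simp add: mult.commute del: binomial_Suc_Suc)
  have "((2*k+2) choose (k+2)) * (k+2) * k = (2*k+2) * (k * ((2*k+1) choose (k+1)))"
    using a by (simp add: algebra_simps del: binomial_Suc_Suc)
  also have "\<dots> = (2*k+2)*(2*k+1) * ((2*k) choose (k+1))" unfolding b by (simp only: mult.assoc)
  finally show ?thesis .
qed

lemma xlem1: "((k+q+1) choose k) * (q+1) = (k+q+1) * ((k+q) choose k)"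
  using binomial_absorb_comp[of "k+q+1" k] by (simp add: mult.commute del: binomial_Suc_Suc)

lemma xlem2: "((k+q+2) choose k) * (q+2) = (k+q+2) * ((k+q+1) choose k)"
  using binomial_absorb_comp[of "k+q+2" k] by (simp add: mult.commute del: binomial_Suc_Suc)

lemma xlem3: "((k+q+2) choose (k+1)) * (k+1) = (k+q+2) * ((k+q+1) choose k)"
  using Suc_times_binomial[of k "k+q+1"] by (simp add: mult.commute del: binomial_Suc_Suc)

lemma polyid:
  fixes k q :: real
  shows "(4*(k+q+3)^2*(k+q+1)*(k+q+2)*(2*q+1)*(2*q+3) - 16*(k+q+2)^2*(q+1)^2*(q+2)^2)*k*(k+2)*(k+q+1)*(2*q-1)
    = -(2*k+1)*Qp (k+q) (k+1)*(q+2)^2 - Qp (k+q) k*k*(k+2)*(2*q-1)"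
  unfolding Qp_def by (simp add: eval_nat_numeral algebra_simps)

lemma gen:
  assumes k1: "1 \<le> k"
  shows "(real (k+q)+3)^2 * of_int (Fs (k+q+2) k) - 16*(real (k+q)+2)^2*of_int (Fs (k+q) k)
         = Hc (k+q) (k+1) - Hc (k+q) k"
proof -
  define X where "X = (k+q) choose k"
  define Y where "Y = (2*k) choose (k+1)"
  define Z where "Z = (2*q) choose q"
  define c1 where "c1 = (2*q+2) choose (q+1)"
  define c2 where "c2 = (2*q+4) choose (q+2)"
  define x1 where "x1 = (k+q+1) choose k"
  define x2 where "x2 = (k+q+2) choose k"
  define x3 where "x3 = (k+q+2) choose (k+1)"
  define y1 where "y1 = (2*k+2) choose (k+2)"
  have n1: "c1*(q+1) = 2*(2*q+1)*Z" using cen[of q] unfolding c1_def Z_def .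
  have e: "2*(q+1)+2 = 2*q+4" "q+1+1=q+2" "2*(q+1) = 2*q+2" "2*(q+1)+1 = 2*q+3" "2*q+2+2 = 2*q+4" "2*q+2+1 = 2*q+3" by simp_all
  have n2: "c2*(q+2) = 2*(2*q+3)*c1" using cen[of "q+1"] unfolding e c2_def c1_def .
  have n3: "x1*(q+1) = (k+q+1)*X" using xlem1[of k q] unfolding x1_def X_def .
  have n4: "x2*(q+2) = (k+q+2)*x1" using xlem2[of k q] unfolding x2_def x1_def .
  have n5: "x3*(k+1) = (k+q+2)*x1" using xlem3[of k q] unfolding x3_def x1_def .
  have n6: "y1*(k+2)*k = (2*k+2)*(2*k+1)*Y" using ylem[of k] unfolding y1_def Y_def .
  have kr: "real k \<ge> 1" using k1 by simp
  have r1: "real c1 = 2*(2*real q+1)*real Z/(real q+1)"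
    using arg_cong[OF n1, of real] by (simp add: field_simps)
  have r2: "real c2 = 2*(2*real q+3)*real c1/(real q+2)"
    using arg_cong[OF n2, of real] by (simp add: field_simps)
  have r3: "real x1 = (real k+real q+1)*real X/(real q+1)"
    using arg_cong[OF n3, of real] by (simp add: field_simps)
  have r4: "real x2 = (real k+real q+2)*real x1/(real q+2)"
    using arg_cong[OF n4, of real] by (simp add: field_simps)
  have r5: "real x3 = (real k+real q+2)*real x1/(real k+1)"
    using arg_cong[OF n5, of real] by (simp add: field_simps)
  have r6: "real y1 = (2*real k+2)*(2*real k+1)*real Y/((real k+2)*real k)"
  proof -
    have d: "(real k+2)*real k \<noteq> 0" using kr by simp
    have "real y1*((real k+2)*real k) = (2*real k+2)*(2*real k+1)*real Y"
      using arg_cong[OF n6, of real] by (simp add: algebra_simps)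
    then show ?thesis using d by (simp add: eq_divide_eq)
  qed
  have f0: "Fs (k+q) k = (-1)^k * int X * int Y * int Z"
  proof -
    have eqs: "2*(k+q) - 2*k = 2*q" "k+q-k = q" by simp_all
    show ?thesis unfolding Fs_def eqs X_def[symmetric] Y_def[symmetric] Z_def[symmetric] by simp
  qed
  have f2: "Fs (k+q+2) k = (-1)^k * int x2 * int Y * int c2"
  proof -
    have "2*(k+q+2) - 2*k = 2*q+4" "k+q+2-k = q+2" by simp_all
    note eqs = this
    show ?thesis unfolding Fs_def eqs x2_def[symmetric] Y_def[symmetric] c2_def[symmetric] by simp
  qed
  have f3: "Fs (k+q+2) (k+1) = - ((-1)^k * int x3 * int y1 * int c1)"
  proof -
    have e1: "2*(k+q+2) - 2*(k+1) = 2*q+2" "k+q+2-(k+1) = q+1" by simp_all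
    have e2: "2*(k+1) = 2*k+2" "k+1+1 = k+2" by simp_all
    show ?thesis unfolding Fs_def unfolding e1 unfolding e2 x3_def[symmetric] y1_def[symmetric] c1_def[symmetric] by simp
  qed
  define T where "T = (-1::real)^k * real X * real Y * real Z"
  define kk where "kk = real k"
  define qq where "qq = real q"
  define Q0 where "Q0 = Qp (kk+qq) kk"
  define Q1 where "Q1 = Qp (kk+qq) (kk+1)"
  have kk1: "kk \<ge> 1" using kr kk_def by simp
  have qq0: "qq \<ge> 0" using qq_def by simp
  have qq2: "2*qq - 1 \<noteq> 0"
  proof
    assume "2*qq - 1 = 0"
    then have "real (2*q) = real 1" unfolding qq_def by simp
    then have "2*q = 1" by (simp only: of_nat_eq_iff)
    then show False by presburger
  qed
  have nzs: "kk \<noteq> 0" "kk+1 \<noteq> 0" "kk+2 \<noteq> 0" "qq+1 \<noteq> 0" "qq+2 \<noteq> 0"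
    using kk1 qq0 by auto
  have F0r: "real_of_int (Fs (k+q) k) = T" unfolding f0 T_def by simp
  have F2r: "real_of_int (Fs (k+q+2) k) = T * (4*(kk+qq+1)*(kk+qq+2)*(2*qq+1)*(2*qq+3)/((qq+1)^2*(qq+2)^2))"
  proof -
    have "real_of_int (Fs (k+q+2) k) = (-1)^k * real x2 * real Y * real c2" unfolding f2 by simp
    also have "\<dots> = (-1)^k * ((kk+qq+2)*((kk+qq+1)*real X/(qq+1))/(qq+2)) * real Y * (2*(2*qq+3)*(2*(2*qq+1)*real Z/(qq+1))/(qq+2))"
      unfolding r4 r3 r2 r1 kk_def qq_def by simp
    also have "\<dots> = T * (4*(kk+qq+1)*(kk+qq+2)*(2*qq+1)*(2*qq+3)/((qq+1)^2*(qq+2)^2))"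
      unfolding T_def using nzs by (simp add: field_simps power2_eq_square)
    finally show ?thesis .
  qed
  have R3: "(kk+qq+2)*((kk+qq+1)/(qq+1))/(kk+1) * ((2*kk+2)*(2*kk+1)/((kk+2)*kk)) * (2*(2*qq+1)/(qq+1))
       = 4*(kk+qq+1)*(kk+qq+2)*(2*kk+1)*(2*qq+1)/((qq+1)^2*kk*(kk+2))"
  proof -
    have e: "2*kk+2 = 2*(kk+1)" by simp
    show ?thesis unfolding e using nzs by (simp add: divide_simps; simp add: algebra_simps power2_eq_square)
  qed
  have F3r: "real_of_int (Fs (k+q+2) (k+1)) = - T * (4*(kk+qq+1)*(kk+qq+2)*(2*kk+1)*(2*qq+1)/((qq+1)^2*kk*(kk+2)))"
  proof -
    have "real_of_int (Fs (k+q+2) (k+1)) = - ((-1)^k * real x3 * real y1 * real c1)" unfolding f3 by simp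
    also have "\<dots> = - T * ((kk+qq+2)*((kk+qq+1)/(qq+1))/(kk+1) * ((2*kk+2)*(2*kk+1)/((kk+2)*kk)) * (2*(2*qq+1)/(qq+1)))"
      unfolding r5 r3 r6 r1 kk_def qq_def T_def by (simp add: mult_ac)
    finally show ?thesis unfolding R3 .
  qed
  have rkq: "real (k+q) = kk+qq" unfolding kk_def qq_def by simp
  have R0: "4*(kk+qq+1)*(kk+qq+2)*(2*qq+1)*(2*qq+3)/((qq+1)^2*(qq+2)^2) * Q0 / (4*(kk+qq+1)^2*(kk+qq+2)*(2*qq+1)*(2*qq+3))
     = Q0/((qq+1)^2*(qq+2)^2*(kk+qq+1))"
    using nzs kk1 qq0 by (simp add: divide_simps; simp add: algebra_simps power2_eq_square)
  have H0: "Hc (k+q) k = T * (Q0/((qq+1)^2*(qq+2)^2*(kk+qq+1)))"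
  proof -
    have d: "real (k+q) - real k = qq" unfolding qq_def by simp
    have "Hc (k+q) k = real_of_int (Fs (k+q+2) k) * Q0 / (4*(kk+qq+1)^2*(kk+qq+2)*(2*qq+1)*(2*qq+3))"
      unfolding Hc_def d unfolding rkq Q0_def kk_def by simp
    also have "\<dots> = T * (4*(kk+qq+1)*(kk+qq+2)*(2*qq+1)*(2*qq+3)/((qq+1)^2*(qq+2)^2) * Q0 / (4*(kk+qq+1)^2*(kk+qq+2)*(2*qq+1)*(2*qq+3)))"
      unfolding F2r by simp
    finally show ?thesis unfolding R0 .
  qed
  have R1: "4*(kk+qq+1)*(kk+qq+2)*(2*kk+1)*(2*qq+1)/((qq+1)^2*kk*(kk+2)) * Q1 / (4*(kk+qq+1)^2*(kk+qq+2)*(2*qq-1)*(2*qq+1))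
     = (2*kk+1)*Q1/((qq+1)^2*kk*(kk+2)*(kk+qq+1)*(2*qq-1))"
    using nzs kk1 qq0 qq2 by (simp add: divide_simps; simp add: algebra_simps power2_eq_square)
  have H1: "Hc (k+q) (k+1) = T * (-((2*kk+1)*Q1/((qq+1)^2*kk*(kk+2)*(kk+qq+1)*(2*qq-1))))"
  proof -
    have d1: "2*(real (k+q) - real (k+1))+1 = 2*qq-1" "2*(real (k+q) - real (k+1))+3 = 2*qq+1"
      unfolding qq_def by simp_all
    have d2: "real (k+1) = kk+1" unfolding kk_def by simp
    have "Hc (k+q) (k+1) = real_of_int (Fs (k+q+2) (k+1)) * Q1 / (4*(kk+qq+1)^2*(kk+qq+2)*(2*qq-1)*(2*qq+1))"
      unfolding Hc_def d1 unfolding rkq d2 Q1_def by simp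
    also have "\<dots> = - T * (4*(kk+qq+1)*(kk+qq+2)*(2*kk+1)*(2*qq+1)/((qq+1)^2*kk*(kk+2)) * Q1 / (4*(kk+qq+1)^2*(kk+qq+2)*(2*qq-1)*(2*qq+1)))"
      unfolding F3r by simp
    finally show ?thesis unfolding R1 by simp
  qed
  define E where "E = (qq+1)^2*(qq+2)^2*kk*(kk+2)*(kk+qq+1)*(2*qq-1)"
  have Enz: "E \<noteq> 0" unfolding E_def using nzs qq2 kk1 qq0 by simp
  define a where "a = (kk+qq+3)^2 * (4*(kk+qq+1)*(kk+qq+2)*(2*qq+1)*(2*qq+3)/((qq+1)^2*(qq+2)^2)) - 16*(kk+qq+2)^2"
  define b where "b = -((2*kk+1)*Q1/((qq+1)^2*kk*(kk+2)*(kk+qq+1)*(2*qq-1))) - Q0/((qq+1)^2*(qq+2)^2*(kk+qq+1))"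
  have aE: "a*E = (4*(kk+qq+3)^2*(kk+qq+1)*(kk+qq+2)*(2*qq+1)*(2*qq+3) - 16*(kk+qq+2)^2*(qq+1)^2*(qq+2)^2)*kk*(kk+2)*(kk+qq+1)*(2*qq-1)"
    unfolding a_def E_def using nzs by (simp add: divide_simps; simp add: algebra_simps power2_eq_square)
  have bE: "b*E = -(2*kk+1)*Q1*(qq+2)^2 - Q0*kk*(kk+2)*(2*qq-1)"
    unfolding b_def E_def using nzs qq2 kk1 qq0 by (simp add: divide_simps; simp add: algebra_simps power2_eq_square)
  have ab: "a = b"
  proof -
    have "a*E = b*E" unfolding aE bE Q0_def Q1_def using polyid[of kk qq] by simp
    then show ?thesis using Enz by simp
  qed
  have lhs: "(real (k+q)+3)^2 * of_int (Fs (k+q+2) k) - 16*(real (k+q)+2)^2*of_int (Fs (k+q) k) = T*a"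
    unfolding rkq F2r F0r a_def by (simp add: algebra_simps)
  have rhs: "Hc (k+q) (k+1) - Hc (k+q) k = T*b"
    unfolding H0 H1 b_def by (simp add: algebra_simps)
  show ?thesis unfolding lhs rhs ab ..
qed



lemma Qp1: "Qp N 1 = 0"
  unfolding Qp_def by (simp add: algebra_simps)

lemma Qp2: "Qp N (N+2) = -12*(N+1)^2*(N+2)*(N+3)^2"
  unfolding Qp_def by (simp add: eval_nat_numeral algebra_simps)

lemma Qp3: "Qp N (N+1) = 4*N*(N+1)*(N+2)^2*(N+3)"
  unfolding Qp_def by (simp add: eval_nat_numeral algebra_simps)

lemma Fs_zero: "n < k \<Longrightarrow> Fs n k = 0"
  unfolding Fs_def by simp

lemma Fs_0: "Fs n 0 = 0"
  unfolding Fs_def by simp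

lemma case0: "(real n+3)^2 * of_int (Fs (n+2) 0) - 16*(real n+2)^2*of_int (Fs n 0) = Hc n (0+1) - Hc n 0"
  unfolding Hc_def by (simp add: Fs_0 Qp1)

lemma case2: "(real n+3)^2 * of_int (Fs (n+2) (n+2)) - 16*(real n+2)^2*of_int (Fs n (n+2)) = Hc n (n+2+1) - Hc n (n+2)"
proof -
  have a: "Fs n (n+2) = 0" "Fs (n+2) (n+2+1) = 0" by (simp_all add: Fs_zero)
  have d: "real n - real (n+2) = -2" "real (n+2) = real n + 2" by simp_all
  have p: "(4*(real n+1)^2*(real n+2)*(2*(-2)+1)*(2*(-2)+3)) = 12*(real n+1)^2*(real n+2)" by simp
  have nz: "real n + 1 \<noteq> 0" "real n + 2 \<noteq> 0" "real n + 3 \<noteq> 0" by (simp_all add: add_nonneg_pos)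
  show ?thesis unfolding Hc_def a d p Qp2 using nz
    by (simp add: divide_simps; simp add: algebra_simps power2_eq_square)
qed

lemma case1: "(real n+3)^2 * of_int (Fs (n+2) (n+1)) - 16*(real n+2)^2*of_int (Fs n (n+1)) = Hc n (n+1+1) - Hc n (n+1)"
proof -
  define Y where "Y = (2*n+2) choose (n+2)"
  define y1 where "y1 = (2*n+4) choose (n+3)"
  have e: "2*(n+1)+2 = 2*n+4" "n+1+2 = n+3" "2*(n+1) = 2*n+2" "n+1+1 = n+2" "2*(n+1)+1 = 2*n+3" "2*n+2+2 = 2*n+4" "2*n+2+1 = 2*n+3" by simp_all
  have ny: "y1*(n+3)*(n+1) = (2*n+4)*(2*n+3)*Y" using ylem[of "n+1"] unfolding e y1_def Y_def .
  have ry: "real y1 = (2*real n+4)*(2*real n+3)*real Y/((real n+3)*(real n+1))"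
  proof -
    have d: "(real n+3)*(real n+1) \<noteq> 0" by (simp add: add_nonneg_pos)
    have "real y1*((real n+3)*(real n+1)) = (2*real n+4)*(2*real n+3)*real Y"
      using arg_cong[OF ny, of real] by (simp add: algebra_simps)
    then show ?thesis using d by (simp add: eq_divide_eq)
  qed
  have a: "Fs n (n+1) = 0" by (simp add: Fs_zero)
  have fa: "Fs (n+2) (n+1) = (-1)^(n+1) * int (n+2) * int Y * 2"
  proof -
    have e1: "2*(n+2) - 2*(n+1) = 2" "n+2-(n+1) = 1" by simp_all
    have e2: "2*(n+1) = 2*n+2" "n+1+1 = n+2" by simp_all
    have e3: "(n+2) choose (n+1) = n+2" using binomial_Suc_n[of "n+1"] by simp
    show ?thesis unfolding Fs_def e1 e3 unfolding e2 Y_def[symmetric] by simp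
  qed
  have fb: "Fs (n+2) (n+1+1) = (-1)^(n+2) * int y1"
  proof -
    have e1: "n+1+1 = n+2" by simp
    have e2: "2*(n+2) - 2*(n+2) = 0" "n+2-(n+2) = 0" "2*(n+2) = 2*n+4" "n+2+1 = n+3" by simp_all
    show ?thesis unfolding e1 Fs_def e2 y1_def[symmetric] by simp
  qed
  define W where "W = (-1::real)^(n+1) * real Y"
  have fa': "real_of_int (Fs (n+2) (n+1)) = 2*(real n+2)*W" unfolding fa W_def by simp
  have fb': "real_of_int (Fs (n+2) (n+1+1)) = - W * ((2*real n+4)*(2*real n+3)/((real n+3)*(real n+1)))"
    unfolding fb W_def by (simp add: ry)
  have d: "real n - real (n+1) = -1" "real (n+1) = real n + 1" "real n - real (n+1+1) = -2" "real (n+1+1) = real n + 2"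
    by simp_all
  have nz: "real n + 1 \<noteq> 0" "real n + 2 \<noteq> 0" "real n + 3 \<noteq> 0" by (simp_all add: add_nonneg_pos)
  show ?thesis unfolding Hc_def a fa' d Qp3 fb' Qp2 using nz
    by (simp add: divide_simps; simp add: algebra_simps power2_eq_square)
qed

lemma step:
  assumes "k \<le> n+2"
  shows "(real n+3)^2 * of_int (Fs (n+2) k) - 16*(real n+2)^2*of_int (Fs n k) = Hc n (Suc k) - Hc n k"
proof -
  consider "k = 0" | "1 \<le> k" "k \<le> n" | "k = n+1" | "k = n+2" using assms by linarith
  then show ?thesis
  proof cases
    case 1 then show ?thesis using case0[of n] by simp
  next
    case 2
    then obtain q where nq: "n = k+q" using le_Suc_ex by blast
    show ?thesis using gen[of k q] 2 unfolding nq by simp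
  next
    case 3 then show ?thesis using case1[of n] by simp
  next
    case 4 then show ?thesis using case2[of n] by simp
  qed
qed

lemma G_Fs: "G n = sum (Fs n) {0..n}"
  unfolding G_def Fs_def ..

lemma G_ext: "sum (Fs n) {0..n+2} = G n"
  unfolding G_Fs by (rule sum.mono_neutral_right) (auto simp: Fs_zero)

lemma recur: "(real m+3)^2 * real_of_int (G (m+2)) - 16*(real m+2)^2 * real_of_int (G m) = 0"
proof -
  have "(\<Sum>k=0..m+2. (real m+3)^2 * of_int (Fs (m+2) k) - 16*(real m+2)^2*of_int (Fs m k))
        = (\<Sum>k=0..m+2. Hc m (Suc k) - Hc m k)"
    by (rule sum.cong[OF refl], rule step, simp)
  also have "\<dots> = Hc m (Suc (m+2)) - Hc m 0" by (rule sum_Suc_diff) simp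
  also have "\<dots> = 0" unfolding Hc_def by (simp add: Fs_0 Fs_zero)
  finally have S: "(\<Sum>k=0..m+2. (real m+3)^2 * of_int (Fs (m+2) k) - 16*(real m+2)^2*of_int (Fs m k)) = 0" .
  have "(\<Sum>k=0..m+2. (real m+3)^2 * of_int (Fs (m+2) k) - 16*(real m+2)^2*of_int (Fs m k))
     = (real m+3)^2 * of_int (sum (Fs (m+2)) {0..m+2}) - 16*(real m+2)^2 * of_int (sum (Fs m) {0..m+2})"
    by (simp only: sum_subtractf sum_distrib_left of_int_sum)
  then show ?thesis using S unfolding G_ext G_Fs[of "m+2", symmetric] by simp
qed

lemma recur_int: "(int m + 3)^2 * G (m+2) = 16*(int m+2)^2 * G m"
proof -
  have "real_of_int ((int m + 3)^2 * G (m+2)) = real_of_int (16*(int m+2)^2 * G m)"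
    using recur[of m] by simp
  then show ?thesis by (simp only: of_int_eq_iff)
qed

lemma binrel: "((2*n+3) choose (n+1)) * (2*n+4) = 4*(2*n+3) * ((2*n+1) choose n)"
proof -
  have a: "(n+1) * ((2*n+2) choose (n+1)) = (2*n+2) * ((2*n+1) choose n)"
    using Suc_times_binomial[of n "2*n+1"] by (simp add: mult.commute del: binomial_Suc_Suc)
  have a2: "((2*n+2) choose (n+1)) = 2 * ((2*n+1) choose n)"
  proof -
    have "(n+1) * ((2*n+2) choose (n+1)) = (n+1) * (2 * ((2*n+1) choose n))"
      unfolding a by (simp add: algebra_simps del: binomial_Suc_Suc)
    moreover have nz: "(n+1::nat) \<noteq> 0" by simp
    ultimately show ?thesis by (simp only: mult_left_cancel[OF nz])
  qed
  have b: "(n+2) * ((2*n+3) choose (n+1)) = (2*n+3) * ((2*n+2) choose (n+1))"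
    using binomial_absorb_comp[of "2*n+3" "n+1"] by (simp add: mult.commute del: binomial_Suc_Suc)
  have "((2*n+3) choose (n+1)) * (2*n+4) = 2*((n+2) * ((2*n+3) choose (n+1)))" by (simp add: algebra_simps del: binomial_Suc_Suc)
  also have "\<dots> = 2*((2*n+3) * (2 * ((2*n+1) choose n)))" unfolding b a2 ..
  finally show ?thesis by (simp add: algebra_simps del: binomial_Suc_Suc)
qed

theorem mainTheorem4:
  shows "(\<forall>n::nat. n \<ge> 2 \<longrightarrow> (int n + 1)^2 * G n = 16 * (int n)^2 * G (n - 2))
       \<and> (\<forall>n::nat. G (2*n+1) = - ((int ((2*n+1) choose n))^2) \<and> G (2*n) = 0)"
proof (intro conjI allI impI)
  fix n :: nat assume "n \<ge> 2"
  then obtain m where nm: "n = m+2" using le_Suc_ex by (metis add.commute)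
  show "(int n + 1)^2 * G n = 16 * (int n)^2 * G (n - 2)"
    using recur_int[of m] unfolding nm by (simp add: algebra_simps)
next
  fix n :: nat
  have "G (2*n+1) = - ((int ((2*n+1) choose n))^2) \<and> G (2*n) = 0"
  proof (induction n)
    case 0 then show ?case by (simp add: G_def eval_nat_numeral)
  next
    case (Suc n)
    have ev: "G (2*Suc n) = 0"
    proof -
      have "(int (2*n) + 3)^2 * G (2*n+2) = 16*(int (2*n)+2)^2 * G (2*n)" by (rule recur_int)
      then have "(int (2*n) + 3)^2 * G (2*n+2) = 0" using Suc.IH by simp
      moreover have "(int (2*n) + 3)^2 \<noteq> 0" by simp
      ultimately show ?thesis by simp
    qed
    have od: "G (2*Suc n+1) = - ((int ((2*Suc n+1) choose Suc n))^2)"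
    proof -
      have r: "(int (2*n+1) + 3)^2 * G (2*n+3) = 16*(int (2*n+1)+2)^2 * G (2*n+1)"
      proof -
        have e: "2*n+1+2 = 2*n+3" by simp
        show ?thesis using recur_int[of "2*n+1"] unfolding e .
      qed
      have br: "int ((2*n+3) choose (n+1)) * (2*int n+4) = 4*(2*int n+3) * int ((2*n+1) choose n)"
        using arg_cong[OF binrel[of n], of int] by simp
      have "(2*int n+4)^2 * G (2*n+3) = (2*int n+4)^2 * (- ((int ((2*n+3) choose (n+1)))^2))"
      proof -
        have "(2*int n+4)^2 * G (2*n+3) = -((4*(2*int n+3) * int ((2*n+1) choose n))^2)"
          using r Suc.IH by (simp add: algebra_simps power2_eq_square)
        also have "\<dots> = -((int ((2*n+3) choose (n+1)) * (2*int n+4))^2)" unfolding br ..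
        finally show ?thesis by (simp add: algebra_simps power2_eq_square)
      qed
      moreover have nz: "(2*int n+4)^2 \<noteq> 0" by simp
      ultimately have G3: "G (2*n+3) = - ((int ((2*n+3) choose (n+1)))^2)" by (simp only: mult_left_cancel[OF nz])
      have e: "2*Suc n+1 = 2*n+3" by simp
      have e2: "Suc n = n+1" by simp
      show ?thesis unfolding e unfolding e2 by (rule G3)
    qed
    show ?case using od ev by (rule conjI)
  qed
  then show "G (2*n+1) = - ((int ((2*n+1) choose n))^2)" "G (2*n) = 0" by simp_all
qed

end
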